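(* Let $n\in\mathbb{N}$ and let $\mathcal{A}_n$ be a Sperner family of subsets of $[1,n]_{\mathbb{Z}}$. For $0\le k\le n$ let $a_k=|\{A\in\mathcal{A}_n: |A|=k\}|$. Then $$\sum_{k=0}^n\frac{a_k}{\binom{n}{k}}\le 4.$$
   Context: $[1,n]_{\mathbb{Z}}=\{1,\dots,n\}$. A collection $\mathcal{A}_n$ of subsets of $[1,n]_{\mathbb{Z}}$ is called a Sperner family if for each $A\in\mathcal{A}_n$ at least one of the following holds: (1) there exists $B_A\subset[1,n]_{\mathbb{Z}}\setminus A$ with $|B_A|\ge n/2$ such that every $A'\supset A$ with $A'\cap B_A\neq\emptyset$ satisfies $A'\notin\mathcal{A}_n$; (2) there exists $B'_A\subset A$ with $|B'_A|\ge n/2$ such that every $A'\subset A$ with $B'_A\setminus A'\ne\emptyset$ satisfies $A'\notin\mathcal{A}_n$. *)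

theory Defs
  imports Complex_Main
begin

text \<open>The paper's (generalised) notion of a Sperner family of subsets of {1..n}.\<close>
definition sperner_family :: "nat \<Rightarrow> nat set set \<Rightarrow> bool" where
  "sperner_family n \<A> \<longleftrightarrow>
     \<A> \<subseteq> Pow {1..n} \<and>
     (\<forall>A\<in>\<A>.
        (\<exists>B. B \<subseteq> {1..n} - A \<and> real (card B) \<ge> real n / 2 \<and>
             (\<forall>A'. A \<subseteq> A' \<longrightarrow> A' \<inter> B \<noteq> {} \<longrightarrow> A' \<notin> \<A>))
      \<or> (\<exists>B'. B' \<subseteq> A \<and> real (card B') \<ge> real n / 2 \<and>
             (\<forall>A'. A' \<subseteq> A \<longrightarrow> B' - A' \<noteq> {} \<longrightarrow> A' \<notin> \<A>)))"

end

theory Submission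
  imports Defs "HOL-Combinatorics.Multiset_Permutations"
begin

lemma split_count:
  assumes fS: "finite S" and AS: "A \<subseteq> S"
  shows "card {xs \<in> permutations_of_set S. set (take (card A) xs) = A}
         = fact (card A) * fact (card S - card A)"
proof -
  have fA: "finite A" using fS AS finite_subset by blast
  have eq: "{xs \<in> permutations_of_set S. set (take (card A) xs) = A}
        = (\<lambda>(ys,zs). ys @ zs) ` (permutations_of_set A \<times> permutations_of_set (S - A))"
  proof (rule set_eqI, rule iffI)
    fix xs assume "xs \<in> {xs \<in> permutations_of_set S. set (take (card A) xs) = A}"
    hence xs: "set xs = S" "distinct xs" "set (take (card A) xs) = A"
      by (auto simp: permutations_of_set_def)
    have d: "distinct (take (card A) xs)" "distinct (drop (card A) xs)" using xs(2) by auto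
    have "set (take (card A) xs) \<inter> set (drop (card A) xs) = {}"
      using xs(2) by (metis append_take_drop_id distinct_append)
    moreover have "set (take (card A) xs) \<union> set (drop (card A) xs) = S"
      using xs(1) by (metis append_take_drop_id set_append)
    ultimately have "set (drop (card A) xs) = S - A" using xs(3) by blast
    hence "(take (card A) xs, drop (card A) xs) \<in> permutations_of_set A \<times> permutations_of_set (S - A)"
      using d xs(3) by (auto simp: permutations_of_set_def)
    thus "xs \<in> (\<lambda>(ys,zs). ys @ zs) ` (permutations_of_set A \<times> permutations_of_set (S - A))"
      by (metis (no_types, lifting) append_take_drop_id case_prod_conv image_eqI)
  next
    fix xs assume "xs \<in> (\<lambda>(ys,zs). ys @ zs) ` (permutations_of_set A \<times> permutations_of_set (S - A))"
    then obtain ys zs where xs: "xs = ys @ zs" and ys: "set ys = A" "distinct ys"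
      and zs: "set zs = S - A" "distinct zs" by (auto simp: permutations_of_set_def)
    have "length ys = card A" using ys distinct_card by metis
    thus "xs \<in> {xs \<in> permutations_of_set S. set (take (card A) xs) = A}"
      using xs ys zs AS by (auto simp: permutations_of_set_def)
  qed
  have inj: "inj_on (\<lambda>(ys,zs). ys @ zs) (permutations_of_set A \<times> permutations_of_set (S - A))"
    by (auto simp: inj_on_def length_finite_permutations_of_set)
  show ?thesis unfolding eq card_image[OF inj] card_cartesian_product
    using fA fS AS by (simp add: card_Diff_subset)
qed

lemma split_count2:
  assumes fS: "finite S" and AS: "A \<subseteq> S" and x: "x \<in> S - A"
  shows "card {xs \<in> permutations_of_set S. set (take (card A) xs) = A \<and> xs ! card A = x}
         = fact (card A) * fact (card S - card A - 1)"
proof -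
  have fA: "finite A" using fS AS finite_subset by blast
  have eq: "{xs \<in> permutations_of_set S. set (take (card A) xs) = A \<and> xs ! card A = x}
        = (\<lambda>(ys,zs). ys @ x # zs) ` (permutations_of_set A \<times> permutations_of_set (S - A - {x}))"
  proof (rule set_eqI, rule iffI)
    fix xs assume "xs \<in> {xs \<in> permutations_of_set S. set (take (card A) xs) = A \<and> xs ! card A = x}"
    hence xs: "set xs = S" "distinct xs" "set (take (card A) xs) = A" "xs ! card A = x"
      by (auto simp: permutations_of_set_def)
    have "card A < length xs"
      using xs x by (metis Diff_iff append_take_drop_id le_eq_less_or_eq linorder_not_le set_append
        set_take_subset subset_eq take_all)
    hence dd: "drop (card A) xs = x # drop (Suc (card A)) xs"
      using xs(4) by (metis Cons_nth_drop_Suc)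
    have d: "distinct (take (card A) xs)" "distinct (drop (card A) xs)" using xs(2) by auto
    have "set (take (card A) xs) \<inter> set (drop (card A) xs) = {}"
      using xs(2) by (metis append_take_drop_id distinct_append)
    moreover have "set (take (card A) xs) \<union> set (drop (card A) xs) = S"
      using xs(1) by (metis append_take_drop_id set_append)
    ultimately have "set (drop (card A) xs) = S - A" using xs(3) by blast
    hence "set (drop (Suc (card A)) xs) = S - A - {x}" using d(2) dd by auto
    hence "(take (card A) xs, drop (Suc (card A)) xs) \<in> permutations_of_set A \<times> permutations_of_set (S - A - {x})"
      using d xs(3) dd by (auto simp: permutations_of_set_def)
    moreover have "xs = take (card A) xs @ x # drop (Suc (card A)) xs"
      using dd by (metis append_take_drop_id)
    ultimately show "xs \<in> (\<lambda>(ys,zs). ys @ x # zs) ` (permutations_of_set A \<times> permutations_of_set (S - A - {x}))"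
      by (metis (no_types, lifting) case_prod_conv image_eqI)
  next
    fix xs assume "xs \<in> (\<lambda>(ys,zs). ys @ x # zs) ` (permutations_of_set A \<times> permutations_of_set (S - A - {x}))"
    then obtain ys zs where xs: "xs = ys @ x # zs" and ys: "set ys = A" "distinct ys"
      and zs: "set zs = S - A - {x}" "distinct zs" by (auto simp: permutations_of_set_def)
    have "length ys = card A" using ys distinct_card by metis
    thus "xs \<in> {xs \<in> permutations_of_set S. set (take (card A) xs) = A \<and> xs ! card A = x}"
      using xs ys zs AS x by (auto simp: permutations_of_set_def nth_append)
  qed
  have inj: "inj_on (\<lambda>(ys,zs). ys @ x # zs) (permutations_of_set A \<times> permutations_of_set (S - A - {x}))"
    by (auto simp: inj_on_def length_finite_permutations_of_set)
  have "card (S - A - {x}) = card S - card A - 1"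
    using fA fS AS x by (simp add: card_Diff_subset)
  thus ?thesis unfolding eq card_image[OF inj] card_cartesian_product
    using fA fS AS by simp
qed


lemma nth_notin_take:
  assumes "distinct xs" "i < length xs"
  shows "xs ! i \<notin> set (take i xs)"
proof -
  have "distinct (take (Suc i) xs)" using assms by simp
  thus ?thesis using assms by (simp add: take_Suc_conv_app_nth)
qed

lemma chain_step:
  assumes "set (take i xs) = A" "set (take j xs) = A'" "i < j" "i < length xs"
  shows "insert (xs ! i) A \<subseteq> A'"
proof -
  have "set (take (Suc i) xs) = insert (xs ! i) A"
    using assms by (simp add: take_Suc_conv_app_nth)
  moreover have "set (take (Suc i) xs) \<subseteq> set (take j xs)"
    using assms(3) by (simp add: set_take_subset_set_take)
  ultimately show ?thesis using assms by simp
qed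

lemma card_filter_sum: "finite X \<Longrightarrow> card {x\<in>X. Q x} = (\<Sum>x\<in>X. if Q x then 1 else 0)"
  using sum.inter_filter[of X "\<lambda>_. 1::nat" Q] by simp

lemma count_bound:
  fixes n :: nat and \<A> :: "nat set set"
  assumes "sperner_family n \<A>"
  shows "(\<Sum>A\<in>\<A>. fact (card A) * fact (n - card A)) \<le> 4 * (fact n :: nat)"
proof -
  define S where "S = {1..n}"
  have fS: "finite S" and cS: "card S = n" by (auto simp: S_def)
  define P where "P = permutations_of_set S"
  have fP: "finite P" and cP: "card P = fact n" using fS cS by (auto simp: P_def)
  have sub: "\<A> \<subseteq> Pow S" using assms by (simp add: sperner_family_def S_def)
  have fA: "finite \<A>" using sub fS by (meson finite_Pow_iff finite_subset)
  define c1 where "c1 A B \<longleftrightarrow> B \<subseteq> S - A \<and> real (card B) \<ge> real n / 2 \<and>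
             (\<forall>A'. A \<subseteq> A' \<longrightarrow> A' \<inter> B \<noteq> {} \<longrightarrow> A' \<notin> \<A>)" for A B
  define c2 where "c2 A B' \<longleftrightarrow> B' \<subseteq> A \<and> real (card B') \<ge> real n / 2 \<and>
             (\<forall>A'. A' \<subseteq> A \<longrightarrow> B' - A' \<noteq> {} \<longrightarrow> A' \<notin> \<A>)" for A B'
  have cases: "(\<exists>B. c1 A B) \<or> (\<exists>B. c2 A B)" if "A \<in> \<A>" for A
    using assms that unfolding sperner_family_def c1_def c2_def S_def by blast
  define t where "t A \<longleftrightarrow> (\<exists>B. c1 A B)" for A
  define B1 where "B1 A = (SOME B. c1 A B)" for A
  define B2 where "B2 A = (SOME B. c2 A B)" for A
  have hB1: "c1 A (B1 A)" if "t A" for A using that unfolding t_def B1_def by (metis someI_ex)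
  have hB2: "c2 A (B2 A)" if "A \<in> \<A>" "\<not> t A" for A
    using that cases unfolding t_def B2_def by (metis someI_ex)
  define good where "good A xs \<longleftrightarrow> set (take (card A) xs) = A \<and>
     (if t A then (card A = n \<or> xs ! card A \<in> B1 A) else (card A = 0 \<or> xs ! (card A - 1) \<in> B2 A))"
    for A xs
  have lenP: "length xs = n" "set xs = S" "distinct xs" if "xs \<in> P" for xs
    using that cS by (auto simp: P_def permutations_of_set_def distinct_card)
  have cardA: "card A \<le> n" if "A \<in> \<A>" for A
    using that sub fS cS by (metis PowD card_mono subsetD)
  have chain: "card {A \<in> \<A>. good A xs} \<le> 2" if xs: "xs \<in> P" for xs
  proof -
    have one1: "card {A \<in> \<A>. good A xs \<and> t A} \<le> 1"
    proof -
      have "A = A'" if a: "A \<in> \<A>" "good A xs" "t A" "A' \<in> \<A>" "good A' xs" "t A'" for A A'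
      proof -
        have key: False if "X \<in> \<A>" "good X xs" "t X" "Y \<in> \<A>" "good Y xs" "card X < card Y" for X Y
        proof -
          have "card X < n" using that cardA[of Y] by linarith
          hence xin: "xs ! card X \<in> B1 X" using that unfolding good_def by auto
          have "insert (xs ! card X) X \<subseteq> Y"
            using chain_step[of "card X" xs X "card Y" Y] that lenP[OF xs] \<open>card X < n\<close>
            unfolding good_def by auto
          thus False using hB1[OF \<open>t X\<close>] xin \<open>Y \<in> \<A>\<close> unfolding c1_def by blast
        qed
        have "\<not> card A < card A'" using key a by blast
        moreover have "\<not> card A' < card A" using key a by blast
        ultimately have "card A = card A'" by simp
        thus ?thesis using a unfolding good_def by metis
      qed
      hence "\<forall>a1\<in>{A \<in> \<A>. good A xs \<and> t A}. \<forall>a2\<in>{A \<in> \<A>. good A xs \<and> t A}. a1 = a2" by blast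
      moreover have "finite {A \<in> \<A>. good A xs \<and> t A}" using fA by simp
      ultimately have "card {A \<in> \<A>. good A xs \<and> t A} \<le> Suc 0" by (simp only: card_le_Suc0_iff_eq)
      thus ?thesis by simp
    qed
    have one2: "card {A \<in> \<A>. good A xs \<and> \<not> t A} \<le> 1"
    proof -
      have "A = A'" if a: "A \<in> \<A>" "good A xs" "\<not> t A" "A' \<in> \<A>" "good A' xs" "\<not> t A'" for A A'
      proof -
        have key: False if "X \<in> \<A>" "good X xs" "Y \<in> \<A>" "\<not> t Y" "good Y xs" "card X < card Y" for X Y
        proof -
          have "card Y \<noteq> 0" using that by linarith
          hence yin: "xs ! (card Y - 1) \<in> B2 Y" using that unfolding good_def by auto
          have cy: "card Y - 1 < length xs" using cardA[OF \<open>Y \<in> \<A>\<close>] lenP[OF xs] \<open>card Y \<noteq> 0\<close> by linarith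
          have "X \<subseteq> set (take (card Y - 1) xs)"
          proof -
            have "card X \<le> card Y - 1" using that by linarith
            hence "set (take (card X) xs) \<subseteq> set (take (card Y - 1) xs)" by (rule set_take_subset_set_take)
            thus ?thesis using that unfolding good_def by simp
          qed
          hence "xs ! (card Y - 1) \<notin> X" using nth_notin_take[OF lenP(3)[OF xs] cy] by blast
          moreover have "X \<subseteq> Y"
          proof -
            have "set (take (card X) xs) \<subseteq> set (take (card Y) xs)"
              using that by (intro set_take_subset_set_take) simp
            thus ?thesis using that unfolding good_def by simp
          qed
          ultimately show False using hB2[OF \<open>Y \<in> \<A>\<close> \<open>\<not> t Y\<close>] yin \<open>X \<in> \<A>\<close> unfolding c2_def by blast
        qed
        have "\<not> card A < card A'" using key a by blast
        moreover have "\<not> card A' < card A" using key a by blast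
        ultimately have "card A = card A'" by simp
        thus ?thesis using a unfolding good_def by metis
      qed
      hence "\<forall>a1\<in>{A \<in> \<A>. good A xs \<and> \<not> t A}. \<forall>a2\<in>{A \<in> \<A>. good A xs \<and> \<not> t A}. a1 = a2" by blast
      moreover have "finite {A \<in> \<A>. good A xs \<and> \<not> t A}" using fA by simp
      ultimately have "card {A \<in> \<A>. good A xs \<and> \<not> t A} \<le> Suc 0" by (simp only: card_le_Suc0_iff_eq)
      thus ?thesis by simp
    qed
    have e: "{A \<in> \<A>. good A xs} = {A \<in> \<A>. good A xs \<and> t A} \<union> {A \<in> \<A>. good A xs \<and> \<not> t A}" by auto
    have "card ({A \<in> \<A>. good A xs \<and> t A} \<union> {A \<in> \<A>. good A xs \<and> \<not> t A}) \<le> card {A \<in> \<A>. good A xs \<and> t A} + card {A \<in> \<A>. good A xs \<and> \<not> t A}"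
      by (rule card_Un_le)
    thus ?thesis unfolding e using one1 one2 by linarith
  qed
  have perset: "fact (card A) * fact (n - card A) \<le> 2 * card {xs \<in> P. good A xs}" if A: "A \<in> \<A>" for A
  proof -
    have AS: "A \<subseteq> S" using A sub by auto
    have fAs: "finite A" using AS fS finite_subset by blast
    let ?k = "card A"
    have base: "card {xs \<in> P. set (take ?k xs) = A} = fact ?k * fact (n - ?k)"
      using split_count[OF fS AS] cS unfolding P_def by simp
    show ?thesis
    proof (cases "t A")
      case True
      have cB: "B1 A \<subseteq> S - A" and cn: "real n / 2 \<le> real (card (B1 A))"
        using hB1[OF True] unfolding c1_def by auto
      show ?thesis
      proof (cases "?k = n")
        case True
        have "{xs \<in> P. good A xs} = {xs \<in> P. set (take ?k xs) = A}"
          using \<open>t A\<close> True unfolding good_def by auto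
        thus ?thesis using base by simp
      next
        case False
        have eq: "{xs \<in> P. good A xs} = (\<Union>x\<in>B1 A. {xs \<in> P. set (take ?k xs) = A \<and> xs ! ?k = x})"
          using \<open>t A\<close> False by (auto simp: good_def)
        have fB: "finite (B1 A)" using finite_subset[OF cB] fS by blast
        have "card {xs \<in> P. good A xs} = (\<Sum>x\<in>B1 A. card {xs \<in> P. set (take ?k xs) = A \<and> xs ! ?k = x})"
          unfolding eq by (rule card_UN_disjoint) (auto simp: fB P_def)
        also have "\<dots> = (\<Sum>x\<in>B1 A. fact ?k * fact (n - ?k - 1))"
          apply (rule sum.cong[OF refl])
          using split_count2[OF fS AS] cB cS unfolding P_def by auto
        also have "\<dots> = card (B1 A) * (fact ?k * fact (n - ?k - 1))" by simp
        finally have e: "card {xs \<in> P. good A xs} = card (B1 A) * (fact ?k * fact (n - ?k - 1))" .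
        have "n \<le> 2 * card (B1 A)" using cn by linarith
        hence "n - ?k \<le> 2 * card (B1 A)" by linarith
        hence "(n - ?k) * (fact ?k * fact (n - ?k - 1)) \<le> 2 * card (B1 A) * (fact ?k * fact (n - ?k - 1))"
          by (rule mult_right_mono) simp
        moreover have "n - ?k > 0" using False cardA[OF A] by linarith
        hence "fact (n - ?k) = (n - ?k) * (fact (n - ?k - 1) :: nat)"
          using fact_reduce[of "n - ?k", where 'a=nat] by simp
        hence "fact ?k * fact (n - ?k) = (n - ?k) * (fact ?k * fact (n - ?k - 1))"
          by (simp add: mult.left_commute)
        ultimately show ?thesis unfolding e by (simp add: mult.assoc)
      qed
    next
      case False
      have cB: "B2 A \<subseteq> A" and cn: "real n / 2 \<le> real (card (B2 A))"
        using hB2[OF A False] unfolding c2_def by auto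
      show ?thesis
      proof (cases "?k = 0")
        case True
        have "{xs \<in> P. good A xs} = {xs \<in> P. set (take ?k xs) = A}"
          using \<open>\<not> t A\<close> True unfolding good_def by auto
        thus ?thesis using base by simp
      next
        case k0: False
        have eq: "{xs \<in> P. good A xs} = (\<Union>x\<in>B2 A. {xs \<in> P. set (take (?k - 1) xs) = A - {x} \<and> xs ! (?k - 1) = x})"
        proof (rule set_eqI, rule iffI)
          fix xs assume xs: "xs \<in> {xs \<in> P. good A xs}"
          hence xP: "xs \<in> P" and tk: "set (take ?k xs) = A" and xin: "xs ! (?k - 1) \<in> B2 A"
            using \<open>\<not> t A\<close> k0 unfolding good_def by auto
          let ?x = "xs ! (?k - 1)"
          have lt: "?k - 1 < length xs" using lenP[OF xP] cardA[OF A] k0 by linarith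
          have "take ?k xs = take (?k - 1) xs @ [?x]"
            using lt k0 by (metis Suc_pred' neq0_conv take_Suc_conv_app_nth)
          hence "A = insert ?x (set (take (?k - 1) xs))" using tk by simp
          moreover have "?x \<notin> set (take (?k - 1) xs)" using nth_notin_take[OF lenP(3)[OF xP] lt] .
          ultimately have f1: "set (take (?k - 1) xs) = A - {?x}" by auto
          show "xs \<in> (\<Union>x\<in>B2 A. {xs \<in> P. set (take (?k - 1) xs) = A - {x} \<and> xs ! (?k - 1) = x})"
            by (rule UN_I[OF xin]) (use xP f1 in simp)
        next
          fix xs assume "xs \<in> (\<Union>x\<in>B2 A. {xs \<in> P. set (take (?k - 1) xs) = A - {x} \<and> xs ! (?k - 1) = x})"
          then obtain x where x: "x \<in> B2 A" and xP: "xs \<in> P" and tk: "set (take (?k - 1) xs) = A - {x}"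
            and nx: "xs ! (?k - 1) = x" by auto
          have xA: "x \<in> A" using x cB by auto
          have lt: "?k - 1 < length xs" using lenP[OF xP] cardA[OF A] k0 by linarith
          have "take ?k xs = take (?k - 1) xs @ [xs ! (?k - 1)]"
            using lt k0 by (metis Suc_pred' neq0_conv take_Suc_conv_app_nth)
          hence "set (take ?k xs) = A" using tk nx xA by auto
          thus "xs \<in> {xs \<in> P. good A xs}" using \<open>\<not> t A\<close> xP nx x unfolding good_def by auto
        qed
        have fB: "finite (B2 A)" using finite_subset[OF cB fAs] .
        have "card {xs \<in> P. good A xs} = (\<Sum>x\<in>B2 A. card {xs \<in> P. set (take (?k - 1) xs) = A - {x} \<and> xs ! (?k - 1) = x})"
          unfolding eq by (rule card_UN_disjoint) (auto simp: fB P_def)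
        also have "\<dots> = (\<Sum>x\<in>B2 A. fact (?k - 1) * fact (n - ?k))"
        proof (rule sum.cong[OF refl])
          fix x assume x: "x \<in> B2 A"
          have xA: "x \<in> A" using x cB by auto
          have ck: "card (A - {x}) = ?k - 1" using xA fAs by simp
          have "card {xs \<in> P. set (take (card (A - {x})) xs) = A - {x} \<and> xs ! card (A - {x}) = x}
              = fact (card (A - {x})) * fact (card S - card (A - {x}) - 1)"
            using split_count2[OF fS _, of "A - {x}" x] AS xA unfolding P_def by auto
          also have "\<dots> = fact (?k - 1) * fact (n - ?k)" using ck cS k0 by simp
          finally show "card {xs \<in> P. set (take (?k - 1) xs) = A - {x} \<and> xs ! (?k - 1) = x}
              = fact (?k - 1) * fact (n - ?k)" unfolding ck .
        qed
        also have "\<dots> = card (B2 A) * (fact (?k - 1) * fact (n - ?k))" by simp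
        finally have e: "card {xs \<in> P. good A xs} = card (B2 A) * (fact (?k - 1) * fact (n - ?k))" .
        have "n \<le> 2 * card (B2 A)" using cn by linarith
        hence "?k \<le> 2 * card (B2 A)" using cardA[OF A] by linarith
        hence "?k * (fact (?k - 1) * fact (n - ?k)) \<le> 2 * card (B2 A) * (fact (?k - 1) * fact (n - ?k))"
          by (rule mult_right_mono) simp
        moreover have "fact ?k = ?k * (fact (?k - 1) :: nat)"
          using k0 fact_reduce[of ?k, where 'a=nat] by simp
        hence "fact ?k * fact (n - ?k) = ?k * (fact (?k - 1) * fact (n - ?k))"
          by (simp add: mult.assoc)
        ultimately show ?thesis unfolding e by (simp add: mult.assoc)
      qed
    qed
  qed
  have "(\<Sum>A\<in>\<A>. fact (card A) * fact (n - card A)) \<le> (\<Sum>A\<in>\<A>. 2 * card {xs \<in> P. good A xs})"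
    by (rule sum_mono) (rule perset)
  also have "\<dots> = 2 * (\<Sum>A\<in>\<A>. \<Sum>xs\<in>P. if good A xs then 1 else 0)"
    by (simp add: sum_distrib_left card_filter_sum[OF fP])
  also have "\<dots> = 2 * (\<Sum>xs\<in>P. \<Sum>A\<in>\<A>. if good A xs then 1 else 0)"
    by (subst sum.swap) simp
  also have "\<dots> = 2 * (\<Sum>xs\<in>P. card {A \<in> \<A>. good A xs})"
    by (simp add: card_filter_sum[OF fA])
  also have "\<dots> \<le> 2 * (\<Sum>xs\<in>P. 2)"
    using chain by (intro mult_left_mono sum_mono) auto
  also have "\<dots> = 4 * fact n" using cP by simp
  finally show ?thesis .
qed

theorem lemma2p3:
  fixes n :: nat and \<A> :: "nat set set"
  assumes "sperner_family n \<A>"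
  shows "(\<Sum>k=0..n. real (card {A\<in>\<A>. card A = k}) / real (n choose k)) \<le> 4"
proof -
  have sub: "\<A> \<subseteq> Pow {1..n}" using assms by (simp add: sperner_family_def)
  have fA: "finite \<A>" using sub by (meson finite_Pow_iff finite_atLeastAtMost finite_subset)
  have cardA: "card A \<le> n" if "A \<in> \<A>" for A
    using that sub by (metis PowD card_atLeastAtMost card_mono diff_Suc_1 finite_atLeastAtMost subsetD)
  define w where "w A = real (fact (card A) * fact (n - card A)) / real (fact n)" for A :: "nat set"
  have "(\<Sum>k=0..n. real (card {A\<in>\<A>. card A = k}) / real (n choose k))
      = (\<Sum>k=0..n. \<Sum>A\<in>{A\<in>\<A>. card A = k}. w A)"
  proof (rule sum.cong[OF refl])
    fix k assume k: "k \<in> {0..n}"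
    have "real (n choose k) = fact n / (fact k * fact (n - k))"
      using k by (simp add: binomial_fact)
    hence "real (card {A\<in>\<A>. card A = k}) / real (n choose k)
        = real (card {A\<in>\<A>. card A = k}) * (fact k * fact (n - k) / fact n)" by simp
    also have "\<dots> = (\<Sum>A\<in>{A\<in>\<A>. card A = k}. w A)"
      by (simp add: w_def)
    finally show "real (card {A\<in>\<A>. card A = k}) / real (n choose k) = (\<Sum>A\<in>{A\<in>\<A>. card A = k}. w A)" .
  qed
  also have "\<dots> = (\<Sum>A\<in>\<A>. w A)"
    by (rule sum.group) (use fA cardA in auto)
  also have "\<dots> = real (\<Sum>A\<in>\<A>. fact (card A) * fact (n - card A)) / real (fact n)"
    by (simp add: w_def sum_divide_distrib)
  also have "\<dots> \<le> real (4 * fact n) / real (fact n)"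
    using count_bound[OF assms] by (intro divide_right_mono) (simp_all only: of_nat_le_iff of_nat_0_le_iff)
  also have "\<dots> = 4" by simp
  finally show ?thesis .
qed

end
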